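(* Let $(\mathcal{G}, \mathit{LC}, \varphi)$ be an intrinsic definition over a class $C=(\mathcal{S},\mathcal{F})$ with $\mathcal{G}=\{g_1,\dots,g_k\}$ and $\mathit{LC}\equiv\forall z.\,\rho(z)$. Let $P_{\mathcal{G}}$ be a program (possibly with auxiliary methods) augmented with ghost code that may read and update the ghost fields $g_1,\dots,g_k$, and let $P$ be the projection of $P_{\mathcal{G}}$ obtained by eliminating the ghost code. Let $\psi_{\mathit{pre}}$ and $\psi_{\mathit{post}}$ be quantifier-free formulae over $\mathcal{F}\cup\mathcal{G}$. If the triple $\langle \mathit{LC}\wedge\psi_{\mathit{pre}}\rangle\; P_{\mathcal{G}}\; \langle \mathit{LC}\wedge\psi_{\mathit{post}}\rangle$ is valid (over configurations interpreting the ghost fields), then the triple $\langle \exists g_1,\dots,g_k.\,\mathit{LC}\wedge\psi_{\mathit{pre}}\rangle\; P\; \langle \exists g_1,\dots,g_k.\,\mathit{LC}\wedge\psi_{\mathit{post}}\rangle$ is valid (over configurations not interpreting the ghost fields), where $\exists g_1,\dots,g_k$ is second-order existential quantification over unary functions on objects.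
   Context: A class $C=(\mathcal{S},\mathcal{F})$ consists of finitely many sorts $\mathcal{S}$ (one of which is the sort $C$ of objects; the others are background sorts such as integers, sets, etc.) and finitely many unary field symbols $\mathcal{F}$ on objects (pointer fields with values in $C\uplus\{\mathit{nil}\}$, or data fields with values in background sorts); $\mathit{nil}$ is a non-object value. A $C$-heap is a finite set $O$ of objects together with an interpretation of every field on every object. An intrinsic definition $(\mathcal{G},\mathit{LC},\varphi(\bar y))$ consists of a finite set $\mathcal{G}$ of monadic (unary) map symbols on objects disjoint from $\mathcal{F}$, a local condition $\mathit{LC}$ of the form $\forall x.\,\rho(x)$ with $\rho$ a quantifier-free formula over $\mathcal{F}\cup\mathcal{G}$ and interpreted background functions, and a quantifier-free correlation formula $\varphi(\bar y)$. Programs are in an imperative while-language with (recursive) methods: $x:=\mathit{nil}$, $x:=y$, $v:=be$, field lookup $y:=x.f$, field mutation $x.f:=y$, allocation $x:=\mathsf{new}\,C()$ (a fresh object whose fields get default values, $\mathit{nil}$ for pointer fields), method calls $\bar r:=F(\bar t)$, $\mathsf{skip}$, $\mathsf{assume}\;c$, $\mathsf{return}$, sequencing, if-then-else and while. A configuration consists of a store, a finite set of allocated objects, and an interpretation of fields on them; there is an error configuration $\bot$ reached on dereferencing $\mathit{nil}$. The language is memory-safe (allocated objects never point to unallocated ones). A triple $\langle\alpha\rangle P\langle\beta\rangle$ is valid if for every configuration $\theta\models\alpha$, executing $P$ from $\theta$ never reaches $\bot$, and whenever $\theta$ transitions to $\theta'$ under $P$, $\theta'\models\beta$. Ghost code manipulates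 distinguished ghost variables and ghost fields (here the maps in $\mathcal{G}$ are treated as ghost fields of objects). Ghost code may read user variables/fields, but user variables/fields are never assigned values depending on ghost variables/fields; an if or while whose condition mentions ghost state must have a purely ghost body; ghost code contains no allocation or assume statements; ghost loops and ghost methods must always terminate. Methods may have ghost input/output parameters. The projection of a ghost-augmented program replaces all ghost code by $\mathsf{skip}$, removes ghost parameters from method signatures, and removes the corresponding arguments/results at each non-ghost call. *)

theory Defs
  imports Main
begin

section \<open>Values, expressions, conditions\<close>

text \<open>Values: objects, the non-object value nil, and background values
  (all background sorts are lumped into one type 'b).\<close>
datatype ('o,'b) val = Obj 'o | NilV | Bg 'b

definition is_obj :: "('o,'b) val \<Rightarrow> bool" where
  "is_obj v \<longleftrightarrow> (\<exists>ob. v = Obj ob)"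

definition allocd :: "'o set \<Rightarrow> ('o,'b) val \<Rightarrow> bool" where
  "allocd A v \<longleftrightarrow> (\<forall>ob. v = Obj ob \<longrightarrow> ob \<in> A)"

datatype ('x,'o,'b) bexp = BVar 'x | BFn "('o,'b) val list \<Rightarrow> 'b" "('x,'o,'b) bexp list"

fun beval :: "('x \<Rightarrow> ('o,'b) val) \<Rightarrow> ('x,'o,'b) bexp \<Rightarrow> ('o,'b) val" where
  "beval s (BVar x) = s x"
| "beval s (BFn g es) = Bg (g (map (beval s) es))"

fun bvars :: "('x,'o,'b) bexp \<Rightarrow> 'x set" where
  "bvars (BVar x) = {x}"
| "bvars (BFn g es) = \<Union> (set (map bvars es))"

fun bmap :: "('x \<Rightarrow> 'y) \<Rightarrow> ('x,'o,'b) bexp \<Rightarrow> ('y,'o,'b) bexp" where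
  "bmap f (BVar x) = BVar (f x)"
| "bmap f (BFn g es) = BFn g (map (bmap f) es)"

datatype ('x,'o,'b) cond =
    CTrue
  | CEq "('x,'o,'b) bexp" "('x,'o,'b) bexp"
  | CPred "('o,'b) val list \<Rightarrow> bool" "('x,'o,'b) bexp list"
  | CNot "('x,'o,'b) cond"
  | CAnd "('x,'o,'b) cond" "('x,'o,'b) cond"

fun ceval :: "('x \<Rightarrow> ('o,'b) val) \<Rightarrow> ('x,'o,'b) cond \<Rightarrow> bool" where
  "ceval s CTrue = True"
| "ceval s (CEq a b) = (beval s a = beval s b)"
| "ceval s (CPred p es) = p (map (beval s) es)"
| "ceval s (CNot c) = (\<not> ceval s c)"
| "ceval s (CAnd c d) = (ceval s c \<and> ceval s d)"

fun cvars :: "('x,'o,'b) cond \<Rightarrow> 'x set" where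
  "cvars CTrue = {}"
| "cvars (CEq a b) = bvars a \<union> bvars b"
| "cvars (CPred p es) = \<Union> (set (map bvars es))"
| "cvars (CNot c) = cvars c"
| "cvars (CAnd c d) = cvars c \<union> cvars d"

fun cmap :: "('x \<Rightarrow> 'y) \<Rightarrow> ('x,'o,'b) cond \<Rightarrow> ('y,'o,'b) cond" where
  "cmap f CTrue = CTrue"
| "cmap f (CEq a b) = CEq (bmap f a) (bmap f b)"
| "cmap f (CPred p es) = CPred p (map (bmap f) es)"
| "cmap f (CNot c) = CNot (cmap f c)"
| "cmap f (CAnd c d) = CAnd (cmap f c) (cmap f d)"

section \<open>Programs\<close>

datatype ('x,'f,'o,'b,'m) stmt =
    SSkip
  | SNil 'x                          (* x := nil *)
  | SAsg 'x 'x                       (* x := y *)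
  | SBAsg 'x "('x,'o,'b) bexp"       (* v := be *)
  | SLookup 'x 'x 'f                 (* y := x.f *)
  | SMut 'x 'f 'x                    (* x.f := y *)
  | SNew 'x                          (* x := new C() *)
  | SCall "'x list" 'm "'x list"     (* rs := F(ts) *)
  | SAssume "('x,'o,'b) cond"
  | SReturn
  | SSeq "('x,'f,'o,'b,'m) stmt" "('x,'f,'o,'b,'m) stmt"
  | SIf "('x,'o,'b) cond" "('x,'f,'o,'b,'m) stmt" "('x,'f,'o,'b,'m) stmt"
  | SWhile "('x,'o,'b) cond" "('x,'f,'o,'b,'m) stmt"

record ('x,'f,'o,'b,'m) meth =
  mins :: "'x list"
  mouts :: "'x list"
  mbody :: "('x,'f,'o,'b,'m) stmt"
  mghost :: bool

type_synonym ('x,'f,'o,'b,'m) env = "'m \<Rightarrow> ('x,'f,'o,'b,'m) meth"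

section \<open>Configurations and big-step semantics\<close>

record ('x,'f,'o,'b) conf =
  st :: "'x \<Rightarrow> ('o,'b) val"
  al :: "'o set"
  hp :: "'f \<Rightarrow> 'o \<Rightarrow> ('o,'b) val"

datatype ('x,'f,'o,'b) outcome = Norm "('x,'f,'o,'b) conf" | Ret "('x,'f,'o,'b) conf" | Err

definition wf_conf :: "('x,'f,'o,'b) conf \<Rightarrow> bool" where
  "wf_conf \<sigma> \<longleftrightarrow> finite (al \<sigma>) \<and> (\<forall>x. allocd (al \<sigma>) (st \<sigma> x))
     \<and> (\<forall>f. \<forall>ob\<in>al \<sigma>. allocd (al \<sigma>) (hp \<sigma> f ob))"

fun upds :: "('x \<Rightarrow> 'v) \<Rightarrow> 'x list \<Rightarrow> 'v list \<Rightarrow> 'x \<Rightarrow> 'v" where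
  "upds s (x # xs) (v # vs) = upds (s(x := v)) xs vs"
| "upds s _ _ = s"

inductive exec :: "('f \<Rightarrow> ('o,'b) val) \<Rightarrow> ('x,'f,'o,'b,'m) env \<Rightarrow> ('x,'f,'o,'b,'m) stmt
    \<Rightarrow> ('x,'f,'o,'b) conf \<Rightarrow> ('x,'f,'o,'b) outcome \<Rightarrow> bool"
  for dflt :: "'f \<Rightarrow> ('o,'b) val" and E :: "('x,'f,'o,'b,'m) env" where
  Skip: "exec dflt E SSkip \<sigma> (Norm \<sigma>)"
| NilA: "exec dflt E (SNil x) \<sigma> (Norm (\<sigma>\<lparr>st := (st \<sigma>)(x := NilV)\<rparr>))"
| Asg: "exec dflt E (SAsg x y) \<sigma> (Norm (\<sigma>\<lparr>st := (st \<sigma>)(x := st \<sigma> y)\<rparr>))"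
| BAsg: "exec dflt E (SBAsg x e) \<sigma> (Norm (\<sigma>\<lparr>st := (st \<sigma>)(x := beval (st \<sigma>) e)\<rparr>))"
| Lookup: "st \<sigma> x = Obj ob \<Longrightarrow>
    exec dflt E (SLookup y x f) \<sigma> (Norm (\<sigma>\<lparr>st := (st \<sigma>)(y := hp \<sigma> f ob)\<rparr>))"
| LookupErr: "\<not> is_obj (st \<sigma> x) \<Longrightarrow> exec dflt E (SLookup y x f) \<sigma> Err"
| Mut: "st \<sigma> x = Obj ob \<Longrightarrow>
    exec dflt E (SMut x f y) \<sigma> (Norm (\<sigma>\<lparr>hp := (hp \<sigma>)(f := (hp \<sigma> f)(ob := st \<sigma> y))\<rparr>))"
| MutErr: "\<not> is_obj (st \<sigma> x) \<Longrightarrow> exec dflt E (SMut x f y) \<sigma> Err"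
| New: "ob \<notin> al \<sigma> \<Longrightarrow>
    exec dflt E (SNew x) \<sigma> (Norm (\<sigma>\<lparr>st := (st \<sigma>)(x := Obj ob), al := insert ob (al \<sigma>),
                                       hp := (\<lambda>f. (hp \<sigma> f)(ob := dflt f))\<rparr>))"
| Call: "exec dflt E (mbody (E m)) (\<sigma>\<lparr>st := upds (\<lambda>_. NilV) (mins (E m)) (map (st \<sigma>) ts)\<rparr>) r \<Longrightarrow>
    r = Norm \<sigma>1 \<or> r = Ret \<sigma>1 \<Longrightarrow>
    exec dflt E (SCall rs m ts) \<sigma> (Norm (\<sigma>1\<lparr>st := upds (st \<sigma>) rs (map (st \<sigma>1) (mouts (E m)))\<rparr>))"
| CallErr: "exec dflt E (mbody (E m)) (\<sigma>\<lparr>st := upds (\<lambda>_. NilV) (mins (E m)) (map (st \<sigma>) ts)\<rparr>) Err \<Longrightarrow>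
    exec dflt E (SCall rs m ts) \<sigma> Err"
| Assume: "ceval (st \<sigma>) c \<Longrightarrow> exec dflt E (SAssume c) \<sigma> (Norm \<sigma>)"
| Return: "exec dflt E SReturn \<sigma> (Ret \<sigma>)"
| SeqN: "exec dflt E a \<sigma> (Norm \<sigma>1) \<Longrightarrow> exec dflt E b \<sigma>1 r \<Longrightarrow> exec dflt E (SSeq a b) \<sigma> r"
| SeqR: "exec dflt E a \<sigma> (Ret \<sigma>1) \<Longrightarrow> exec dflt E (SSeq a b) \<sigma> (Ret \<sigma>1)"
| SeqE: "exec dflt E a \<sigma> Err \<Longrightarrow> exec dflt E (SSeq a b) \<sigma> Err"
| IfT: "ceval (st \<sigma>) c \<Longrightarrow> exec dflt E a \<sigma> r \<Longrightarrow> exec dflt E (SIf c a b) \<sigma> r"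
| IfF: "\<not> ceval (st \<sigma>) c \<Longrightarrow> exec dflt E b \<sigma> r \<Longrightarrow> exec dflt E (SIf c a b) \<sigma> r"
| WhileF: "\<not> ceval (st \<sigma>) c \<Longrightarrow> exec dflt E (SWhile c a) \<sigma> (Norm \<sigma>)"
| WhileN: "ceval (st \<sigma>) c \<Longrightarrow> exec dflt E a \<sigma> (Norm \<sigma>1) \<Longrightarrow> exec dflt E (SWhile c a) \<sigma>1 r \<Longrightarrow>
    exec dflt E (SWhile c a) \<sigma> r"
| WhileR: "ceval (st \<sigma>) c \<Longrightarrow> exec dflt E a \<sigma> (Ret \<sigma>1) \<Longrightarrow> exec dflt E (SWhile c a) \<sigma> (Ret \<sigma>1)"
| WhileE: "ceval (st \<sigma>) c \<Longrightarrow> exec dflt E a \<sigma> Err \<Longrightarrow> exec dflt E (SWhile c a) \<sigma> Err"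

definition valid :: "('f \<Rightarrow> ('o,'b) val) \<Rightarrow> ('x,'f,'o,'b,'m) env \<Rightarrow> (('x,'f,'o,'b) conf \<Rightarrow> bool)
    \<Rightarrow> ('x,'f,'o,'b,'m) stmt \<Rightarrow> (('x,'f,'o,'b) conf \<Rightarrow> bool) \<Rightarrow> bool" where
  "valid dflt E \<alpha> c \<beta> \<longleftrightarrow> (\<forall>\<sigma>. wf_conf \<sigma> \<and> \<alpha> \<sigma> \<longrightarrow>
      \<not> exec dflt E c \<sigma> Err \<and>
      (\<forall>\<sigma>'. exec dflt E c \<sigma> (Norm \<sigma>') \<or> exec dflt E c \<sigma> (Ret \<sigma>') \<longrightarrow> \<beta> \<sigma>'))"

section \<open>Ghost code\<close>

text \<open>In a ghost-augmented program, variables have type 'x + 'gx and fields 'f + 'g: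
  Inl = user, Inr = ghost.\<close>

fun gh :: "('x + 'gx,'f + 'g,'o,'b,'m) env \<Rightarrow> ('x + 'gx,'f + 'g,'o,'b,'m) stmt \<Rightarrow> bool" where
  "gh E SSkip = True"
| "gh E (SNil x) = (\<not> isl x)"
| "gh E (SAsg x y) = (\<not> isl x)"
| "gh E (SBAsg x e) = (\<not> isl x)"
| "gh E (SLookup y x f) = (\<not> isl y)"
| "gh E (SMut x f y) = (\<not> isl f)"
| "gh E (SNew x) = False"
| "gh E (SCall rs m ts) = mghost (E m)"
| "gh E (SAssume c) = False"
| "gh E SReturn = False"
| "gh E (SSeq a b) = (gh E a \<and> gh E b)"
| "gh E (SIf c a b) = (gh E a \<and> gh E b)"
| "gh E (SWhile c a) = gh E a"

definition user_bexp :: "('x + 'gx,'o,'b) bexp \<Rightarrow> bool" where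
  "user_bexp e \<longleftrightarrow> (\<forall>x\<in>bvars e. isl x)"

definition user_cond :: "('x + 'gx,'o,'b) cond \<Rightarrow> bool" where
  "user_cond c \<longleftrightarrow> (\<forall>x\<in>cvars c. isl x)"

text \<open>Syntactic ghost discipline: user state never depends on ghost state; conditions
  mentioning ghost state guard purely ghost bodies; ghost code contains no allocation,
  assume or return (built into gh); call arities match.\<close>
fun gh_ok :: "('x + 'gx,'f + 'g,'o,'b,'m) env \<Rightarrow> ('x + 'gx,'f + 'g,'o,'b,'m) stmt \<Rightarrow> bool" where
  "gh_ok E SSkip = True"
| "gh_ok E (SNil x) = True"
| "gh_ok E (SAsg x y) = (isl x \<longrightarrow> isl y)"
| "gh_ok E (SBAsg x e) = (isl x \<longrightarrow> user_bexp e)"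
| "gh_ok E (SLookup y x f) = (isl y \<longrightarrow> isl x \<and> isl f)"
| "gh_ok E (SMut x f y) = (isl f \<longrightarrow> isl x \<and> isl y)"
| "gh_ok E (SNew x) = isl x"
| "gh_ok E (SCall rs m ts) =
     (length ts = length (mins (E m)) \<and> length rs = length (mouts (E m)) \<and>
      (if mghost (E m) then (\<forall>r\<in>set rs. \<not> isl r)
       else (\<forall>i<length ts. isl (mins (E m) ! i) \<longrightarrow> isl (ts ! i)) \<and>
            (\<forall>i<length rs. isl (rs ! i) = isl (mouts (E m) ! i))))"
| "gh_ok E (SAssume c) = user_cond c"
| "gh_ok E SReturn = True"
| "gh_ok E (SSeq a b) = (gh_ok E a \<and> gh_ok E b)"
| "gh_ok E (SIf c a b) = (gh_ok E a \<and> gh_ok E b \<and> (user_cond c \<or> (gh E a \<and> gh E b)))"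
| "gh_ok E (SWhile c a) = (gh_ok E a \<and> (user_cond c \<or> gh E a))"

fun subs :: "('x,'f,'o,'b,'m) stmt \<Rightarrow> ('x,'f,'o,'b,'m) stmt set" where
  "subs (SSeq a b) = insert (SSeq a b) (subs a \<union> subs b)"
| "subs (SIf c a b) = insert (SIf c a b) (subs a \<union> subs b)"
| "subs (SWhile c a) = insert (SWhile c a) (subs a)"
| "subs c = {c}"

definition is_while :: "('x,'f,'o,'b,'m) stmt \<Rightarrow> bool" where
  "is_while c \<longleftrightarrow> (\<exists>b a. c = SWhile b a)"

definition terminates :: "('f \<Rightarrow> ('o,'b) val) \<Rightarrow> ('x,'f,'o,'b,'m) env \<Rightarrow> ('x,'f,'o,'b,'m) stmt \<Rightarrow> bool" where
  "terminates dflt E c \<longleftrightarrow> (\<forall>\<sigma>. wf_conf \<sigma> \<longrightarrow> (\<exists>r. exec dflt E c \<sigma> r))"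

definition ghost_prog :: "('f + 'g \<Rightarrow> ('o,'b) val) \<Rightarrow> ('x + 'gx,'f + 'g,'o,'b,'m) env
    \<Rightarrow> ('x + 'gx,'f + 'g,'o,'b,'m) stmt \<Rightarrow> bool" where
  "ghost_prog dflt E main \<longleftrightarrow>
     gh_ok E main \<and> (\<forall>m. gh_ok E (mbody (E m))) \<and>
     (\<forall>m. mghost (E m) \<longrightarrow> gh E (mbody (E m)) \<and> (\<forall>x\<in>set (mouts (E m)). \<not> isl x)) \<and>
     (\<forall>c. (c \<in> subs main \<or> (\<exists>m. c \<in> subs (mbody (E m)))) \<longrightarrow> is_while c \<longrightarrow> gh E c \<longrightarrow>
          terminates dflt E c) \<and>
     (\<forall>m. mghost (E m) \<longrightarrow> terminates dflt E (mbody (E m)))"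

section \<open>Projection (ghost elimination)\<close>

definition keepu :: "('x + 'gx) list \<Rightarrow> 'a list \<Rightarrow> 'a list" where
  "keepu fs xs = map snd (filter (\<lambda>p. isl (fst p)) (zip fs xs))"

fun proj :: "('x + 'gx,'f + 'g,'o,'b,'m) env \<Rightarrow> ('x + 'gx,'f + 'g,'o,'b,'m) stmt
    \<Rightarrow> ('x,'f,'o,'b,'m) stmt" where
  "proj E SSkip = SSkip"
| "proj E (SNil x) = (if isl x then SNil (projl x) else SSkip)"
| "proj E (SAsg x y) = (if isl x then SAsg (projl x) (projl y) else SSkip)"
| "proj E (SBAsg x e) = (if isl x then SBAsg (projl x) (bmap projl e) else SSkip)"
| "proj E (SLookup y x f) = (if isl y then SLookup (projl y) (projl x) (projl f) else SSkip)"
| "proj E (SMut x f y) = (if isl f then SMut (projl x) (projl f) (projl y) else SSkip)"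
| "proj E (SNew x) = SNew (projl x)"
| "proj E (SCall rs m ts) = (if mghost (E m) then SSkip
     else SCall (map projl (keepu (mouts (E m)) rs)) m (map projl (keepu (mins (E m)) ts)))"
| "proj E (SAssume c) = SAssume (cmap projl c)"
| "proj E SReturn = SReturn"
| "proj E (SSeq a b) = (if gh E (SSeq a b) then SSkip else SSeq (proj E a) (proj E b))"
| "proj E (SIf c a b) = (if gh E (SIf c a b) then SSkip else SIf (cmap projl c) (proj E a) (proj E b))"
| "proj E (SWhile c a) = (if gh E (SWhile c a) then SSkip else SWhile (cmap projl c) (proj E a))"

definition proj_env :: "('x + 'gx,'f + 'g,'o,'b,'m) env \<Rightarrow> ('x,'f,'o,'b,'m) env" where
  "proj_env E = (\<lambda>m. \<lparr>mins = map projl (filter isl (mins (E m))),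
                       mouts = map projl (filter isl (mouts (E m))),
                       mbody = proj E (mbody (E m)),
                       mghost = mghost (E m)\<rparr>)"

section \<open>Quantifier-free formulas over fields, and the local condition\<close>

datatype ('x,'f,'o,'b) tm =
    TVar 'x | TNil | TFld 'f "('x,'f,'o,'b) tm" | TFn "('o,'b) val list \<Rightarrow> 'b" "('x,'f,'o,'b) tm list"

datatype ('x,'f,'o,'b) fm =
    FTrue
  | FEq "('x,'f,'o,'b) tm" "('x,'f,'o,'b) tm"
  | FPred "('o,'b) val list \<Rightarrow> bool" "('x,'f,'o,'b) tm list"
  | FNot "('x,'f,'o,'b) fm"
  | FAnd "('x,'f,'o,'b) fm" "('x,'f,'o,'b) fm"

fun teval :: "('x \<Rightarrow> ('o,'b) val) \<Rightarrow> ('f \<Rightarrow> 'o \<Rightarrow> ('o,'b) val) \<Rightarrow> ('x,'f,'o,'b) tm \<Rightarrow> ('o,'b) val" where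
  "teval s h (TVar x) = s x"
| "teval s h TNil = NilV"
| "teval s h (TFld f t) = (case teval s h t of Obj ob \<Rightarrow> h f ob | _ \<Rightarrow> NilV)"
| "teval s h (TFn g ts) = Bg (g (map (teval s h) ts))"

fun feval :: "('x \<Rightarrow> ('o,'b) val) \<Rightarrow> ('f \<Rightarrow> 'o \<Rightarrow> ('o,'b) val) \<Rightarrow> ('x,'f,'o,'b) fm \<Rightarrow> bool" where
  "feval s h FTrue = True"
| "feval s h (FEq a b) = (teval s h a = teval s h b)"
| "feval s h (FPred p ts) = p (map (teval s h) ts)"
| "feval s h (FNot p) = (\<not> feval s h p)"
| "feval s h (FAnd p q) = (feval s h p \<and> feval s h q)"

text \<open>LC = \<forall>z. \<rho>(z), z ranging over the allocated objects.\<close>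
definition holds_LC :: "(unit,'f,'o,'b) fm \<Rightarrow> 'o set \<Rightarrow> ('f \<Rightarrow> 'o \<Rightarrow> ('o,'b) val) \<Rightarrow> bool" where
  "holds_LC \<rho> A h \<longleftrightarrow> (\<forall>ob\<in>A. feval (\<lambda>_. Obj ob) h \<rho>)"

text \<open>LC \<and> \<psi> on ghost-augmented configurations (ghost fields interpreted by the heap).\<close>
definition aug_assn :: "(unit,'f + 'g,'o,'b) fm \<Rightarrow> ('x,'f + 'g,'o,'b) fm
    \<Rightarrow> ('x + 'gx,'f + 'g,'o,'b) conf \<Rightarrow> bool" where
  "aug_assn \<rho> \<psi> \<sigma> \<longleftrightarrow> holds_LC \<rho> (al \<sigma>) (hp \<sigma>) \<and> feval (\<lambda>x. st \<sigma> (Inl x)) (hp \<sigma>) \<psi>"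

text \<open>\<exists>g1..gk. LC \<and> \<psi> on user configurations: second-order quantification over
  maps from (allocated) objects to values (objects among them allocated, or nil / background).\<close>
definition ex_assn :: "(unit,'f + 'g,'o,'b) fm \<Rightarrow> ('x,'f + 'g,'o,'b) fm
    \<Rightarrow> ('x,'f,'o,'b) conf \<Rightarrow> bool" where
  "ex_assn \<rho> \<psi> \<sigma> \<longleftrightarrow> (\<exists>G :: 'g \<Rightarrow> 'o \<Rightarrow> ('o,'b) val.
      (\<forall>g. \<forall>ob\<in>al \<sigma>. allocd (al \<sigma>) (G g ob)) \<and>
      holds_LC \<rho> (al \<sigma>) (case_sum (hp \<sigma>) G) \<and> feval (st \<sigma>) (case_sum (hp \<sigma>) G) \<psi>)"

end

theory Submission
  imports Defs
begin

lemma upds_P: "(\<forall>y. P (s y)) \<Longrightarrow> (\<forall>v\<in>set vs. P v) \<Longrightarrow> P (upds s xs vs y)"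
  by (induction s xs vs arbitrary: y rule: upds.induct) auto

lemma upds_notin: "y \<notin> set xs \<Longrightarrow> upds s xs vs y = s y"
  by (induction s xs vs rule: upds.induct) auto

lemma allocd_mono: "allocd A v \<Longrightarrow> A \<subseteq> B \<Longrightarrow> allocd B v"
  unfolding allocd_def by blast

lemma alloc_mono: "exec D E c \<sigma> r \<Longrightarrow> (r = Norm \<sigma>' \<or> r = Ret \<sigma>') \<Longrightarrow> al \<sigma> \<subseteq> al \<sigma>'"
  by (induction arbitrary: \<sigma>' rule: exec.induct) force+

lemma wf_upd_st: "wf_conf \<sigma> \<Longrightarrow> \<forall>y. allocd (al \<sigma>) (s y) \<Longrightarrow> \<forall>v\<in>set vs. allocd (al \<sigma>) v
  \<Longrightarrow> wf_conf (\<sigma>\<lparr>st := upds s xs vs\<rparr>)"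
proof -
  assume w: "wf_conf \<sigma>" and a: "\<forall>y. allocd (al \<sigma>) (s y)" and b: "\<forall>v\<in>set vs. allocd (al \<sigma>) v"
  have "\<forall>y. allocd (al \<sigma>) (upds s xs vs y)"
  proof
    fix y show "allocd (al \<sigma>) (upds s xs vs y)"
      by (rule upds_P[of "allocd (al \<sigma>)", OF a b])
  qed
  then show ?thesis using w by (simp add: wf_conf_def)
qed

lemma wf_call: "wf_conf \<sigma> \<Longrightarrow> wf_conf (\<sigma>\<lparr>st := upds (\<lambda>_. NilV) xs (map (st \<sigma>) ts)\<rparr>)"
  by (rule wf_upd_st) (auto simp: wf_conf_def allocd_def)

lemma wfp: "exec D E c \<sigma> r \<Longrightarrow> \<forall>f. \<not> is_obj (D f) \<Longrightarrow> wf_conf \<sigma> \<Longrightarrow> (r = Norm \<sigma>' \<or> r = Ret \<sigma>') \<Longrightarrow> wf_conf \<sigma>'"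
proof (induction arbitrary: \<sigma>' rule: exec.induct)
  case (BAsg x e \<sigma>)
  then show ?case by (cases e) (auto simp: wf_conf_def allocd_def split: if_splits)
next
  case (Lookup \<sigma> x ob y f)
  then have "ob \<in> al \<sigma>" by (auto simp: wf_conf_def allocd_def)
  then have "allocd (al \<sigma>) (hp \<sigma> f ob)" using Lookup.prems(2) unfolding wf_conf_def by blast
  then show ?case using Lookup by (auto simp: wf_conf_def split: if_splits)
next
  case (Mut \<sigma> x ob f y)
  then show ?case by (auto simp: wf_conf_def allocd_def split: if_splits)
next
  case (New ob \<sigma> x)
  have d: "\<forall>f. allocd (insert ob (al \<sigma>)) (D f)" using New.prems(1) by (auto simp: allocd_def is_obj_def)
  have s1: "\<forall>y. allocd (insert ob (al \<sigma>)) (((st \<sigma>)(x := Obj ob)) y)"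
    using New.prems(2) unfolding wf_conf_def allocd_def by auto
  have h1: "\<forall>f. \<forall>o'\<in>insert ob (al \<sigma>). allocd (insert ob (al \<sigma>)) (((hp \<sigma> f)(ob := D f)) o')"
  proof (intro allI ballI)
    fix f o' assume "o' \<in> insert ob (al \<sigma>)"
    then show "allocd (insert ob (al \<sigma>)) (((hp \<sigma> f)(ob := D f)) o')"
      using New.prems(2) d unfolding wf_conf_def allocd_def by (cases "o' = ob") auto
  qed
  have eq: "\<sigma>' = \<sigma>\<lparr>st := (st \<sigma>)(x := Obj ob), al := insert ob (al \<sigma>), hp := \<lambda>f. (hp \<sigma> f)(ob := D f)\<rparr>"
    using New.prems(3) by simp
  have "finite (al \<sigma>')" using New.prems(2) unfolding eq wf_conf_def by simp
  moreover have "\<forall>y. allocd (al \<sigma>') (st \<sigma>' y)" using s1 unfolding eq by simp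
  moreover have "\<forall>f. \<forall>o'\<in>al \<sigma>'. allocd (al \<sigma>') (hp \<sigma>' f o')" using h1 unfolding eq by simp
  ultimately show ?case unfolding wf_conf_def by blast
next
  case (Call m \<sigma> ts r \<sigma>1 rs)
  have "wf_conf (\<sigma>\<lparr>st := upds (\<lambda>_. NilV) (mins (E m)) (map (st \<sigma>) ts)\<rparr>)"
    by (rule wf_call[OF Call.prems(2)])
  then have w1: "wf_conf \<sigma>1" using Call by blast
  have sub: "al \<sigma> \<subseteq> al \<sigma>1" using alloc_mono[OF Call.hyps(1) \<open>r = Norm \<sigma>1 \<or> r = Ret \<sigma>1\<close>] by simp
  have "\<forall>y. allocd (al \<sigma>1) (st \<sigma> y)" using Call.prems(2) sub allocd_mono unfolding wf_conf_def by blast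
  moreover have "\<forall>v\<in>set (map (st \<sigma>1) (mouts (E m))). allocd (al \<sigma>1) v" using w1 by (auto simp: wf_conf_def)
  ultimately have "wf_conf (\<sigma>1\<lparr>st := upds (st \<sigma>) rs (map (st \<sigma>1) (mouts (E m)))\<rparr>)"
    using w1 wf_upd_st by blast
  then show ?case using Call.prems(3) by simp
next
  case (Skip \<sigma>) then show ?case by simp
next
  case (NilA x \<sigma>) then show ?case by (auto simp: wf_conf_def allocd_def split: if_splits)
next
  case (Asg x y \<sigma>) then show ?case by (auto simp: wf_conf_def allocd_def split: if_splits)
next
  case (LookupErr \<sigma> x y f) then show ?case by simp
next
  case (MutErr \<sigma> x f y) then show ?case by simp
next
  case (CallErr m \<sigma> ts rs) then show ?case by simp
next
  case (Assume \<sigma> c) then show ?case by simp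
next
  case (Return \<sigma>) then show ?case by simp
next
  case (SeqN a \<sigma> \<sigma>1 b r)
  have "wf_conf \<sigma>1" using SeqN.IH(1)[of \<sigma>1] SeqN.prems(1,2) by simp
  then show ?case using SeqN.IH(2) SeqN.prems(1,3) by blast
next
  case (SeqR a \<sigma> \<sigma>1 b) then show ?case by blast
next
  case (SeqE a \<sigma> b) then show ?case by simp
next
  case (IfT \<sigma> c a r b) then show ?case by blast
next
  case (IfF \<sigma> c b r a) then show ?case by blast
next
  case (WhileF \<sigma> c a) then show ?case by simp
next
  case (WhileN \<sigma> c a \<sigma>1 r)
  have "wf_conf \<sigma>1" using WhileN.IH(1)[of \<sigma>1] WhileN.prems(1,2) by simp
  then show ?case using WhileN.IH(2) WhileN.prems(1,3) by blast
next
  case (WhileR \<sigma> c a \<sigma>1) then show ?case by blast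
next
  case (WhileE \<sigma> c a) then show ?case by simp
qed

definition Pw :: "('f + 'g \<Rightarrow> ('o,'b) val) \<Rightarrow> ('x + 'gx,'f + 'g,'o,'b,'m) env \<Rightarrow> ('x + 'gx,'f + 'g,'o,'b,'m) stmt \<Rightarrow> bool" where
  "Pw D E c \<longleftrightarrow> (\<forall>c'\<in>subs c. is_while c' \<longrightarrow> gh E c' \<longrightarrow> terminates D E c')"

lemma gh_noret: "exec D E c \<sigma> r \<Longrightarrow> gh E c \<Longrightarrow> r \<noteq> Ret \<sigma>'"
  by (induction arbitrary: \<sigma>' rule: exec.induct) auto

lemma gh_term: "gh E c \<Longrightarrow> Pw D E c \<Longrightarrow> (\<forall>m. mghost (E m) \<longrightarrow> terminates D E (mbody (E m)))
  \<Longrightarrow> \<forall>f. \<not> is_obj (D f) \<Longrightarrow> wf_conf \<sigma> \<Longrightarrow> \<exists>r. exec D E c \<sigma> r"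
proof (induction c arbitrary: \<sigma>)
  case SSkip then show ?case by (blast intro: exec.intros)
next
  case (SNil x) then show ?case by (blast intro: exec.intros)
next
  case (SAsg x y) then show ?case by (blast intro: exec.intros)
next
  case (SBAsg x e) then show ?case by (blast intro: exec.intros)
next
  case (SLookup y x f) then show ?case
  proof (cases "is_obj (st \<sigma> x)")
    case True then obtain ob where "st \<sigma> x = Obj ob" by (auto simp: is_obj_def)
    then show ?thesis by (blast intro: exec.Lookup)
  next
    case False then show ?thesis by (blast intro: exec.LookupErr)
  qed
next
  case (SMut x f y) then show ?case
  proof (cases "is_obj (st \<sigma> x)")
    case True then obtain ob where "st \<sigma> x = Obj ob" by (auto simp: is_obj_def)
    then show ?thesis by (blast intro: exec.Mut)
  next
    case False then show ?thesis by (blast intro: exec.MutErr)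
  qed
next
  case (SNew x) then show ?case by simp
next
  case (SCall rs m ts)
  have "wf_conf (\<sigma>\<lparr>st := upds (\<lambda>_. NilV) (mins (E m)) (map (st \<sigma>) ts)\<rparr>)"
    by (rule wf_call[OF SCall.prems(5)])
  then obtain r where r: "exec D E (mbody (E m)) (\<sigma>\<lparr>st := upds (\<lambda>_. NilV) (mins (E m)) (map (st \<sigma>) ts)\<rparr>) r"
    using SCall.prems(1,3) by (auto simp: terminates_def)
  show ?case
  proof (cases r)
    case (Norm x1) then show ?thesis using r by (blast intro: exec.intros)
  next
    case (Ret x2) then show ?thesis using r by (blast intro: exec.intros)
  next
    case Err then show ?thesis using r by (blast intro: exec.intros)
  qed
next
  case (SAssume c) then show ?case by simp
next
  case SReturn then show ?case by simp
next
  case (SSeq a b)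
  have pa: "Pw D E a" and pb: "Pw D E b" using SSeq.prems(2) by (auto simp: Pw_def)
  have ga: "gh E a" and gb: "gh E b" using SSeq.prems(1) by auto
  obtain r where r: "exec D E a \<sigma> r" using SSeq.IH(1)[OF ga pa SSeq.prems(3,4,5)] by blast
  show ?case
  proof (cases r)
    case (Norm \<sigma>1)
    then have w1: "wf_conf \<sigma>1" using wfp[OF r SSeq.prems(4,5)] by blast
    obtain r' where "exec D E b \<sigma>1 r'" using SSeq.IH(2)[OF gb pb SSeq.prems(3,4) w1] by blast
    then have "exec D E (SSeq a b) \<sigma> r'" using r Norm by (blast intro: exec.SeqN)
    then show ?thesis by blast
  next
    case (Ret x2)
    then have "exec D E (SSeq a b) \<sigma> (Ret x2)" using r by (blast intro: exec.SeqR)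
    then show ?thesis by blast
  next
    case Err
    then have "exec D E (SSeq a b) \<sigma> Err" using r by (blast intro: exec.SeqE)
    then show ?thesis by blast
  qed
next
  case (SIf c a b)
  have pa: "Pw D E a" and pb: "Pw D E b" using SIf.prems(2) by (auto simp: Pw_def)
  have ga: "gh E a" and gb: "gh E b" using SIf.prems(1) by auto
  show ?case
  proof (cases "ceval (st \<sigma>) c")
    case True
    obtain r where "exec D E a \<sigma> r" using SIf.IH(1)[OF ga pa SIf.prems(3,4,5)] by blast
    then have "exec D E (SIf c a b) \<sigma> r" using True by (blast intro: exec.IfT)
    then show ?thesis by blast
  next
    case False
    obtain r where "exec D E b \<sigma> r" using SIf.IH(2)[OF gb pb SIf.prems(3,4,5)] by blast
    then have "exec D E (SIf c a b) \<sigma> r" using False by (blast intro: exec.IfF)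
    then show ?thesis by blast
  qed
next
  case (SWhile c a)
  then show ?case by (auto simp: Pw_def is_while_def terminates_def)
qed

definition usame :: "('x + 'gx,'f + 'g,'o,'b) conf \<Rightarrow> ('x + 'gx,'f + 'g,'o,'b) conf \<Rightarrow> bool" where
  "usame \<sigma> \<sigma>' \<longleftrightarrow> (\<forall>x. st \<sigma>' (Inl x) = st \<sigma> (Inl x)) \<and> al \<sigma>' = al \<sigma> \<and> (\<forall>f. hp \<sigma>' (Inl f) = hp \<sigma> (Inl f))"

lemma upart: "exec D E c \<sigma> r \<Longrightarrow> gh E c \<Longrightarrow> gh_ok E c \<Longrightarrow> \<forall>m. gh_ok E (mbody (E m))
  \<Longrightarrow> \<forall>m. mghost (E m) \<longrightarrow> gh E (mbody (E m)) \<Longrightarrow> (r = Norm \<sigma>' \<or> r = Ret \<sigma>') \<Longrightarrow> usame \<sigma> \<sigma>'"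
proof (induction arbitrary: \<sigma>' rule: exec.induct)
  case (Call m \<sigma> ts r \<sigma>1 rs)
  have u: "usame (\<sigma>\<lparr>st := upds (\<lambda>_. NilV) (mins (E m)) (map (st \<sigma>) ts)\<rparr>) \<sigma>1"
    using Call by auto
  have "\<forall>x. Inl x \<notin> set rs" using Call.prems(2,1) by (auto split: if_splits)
  then show ?case using u Call.prems(5) by (auto simp: usame_def upds_notin)
qed (auto simp: usame_def)

lemma isl_projl: "isl v0 \<Longrightarrow> v = projl v0 \<Longrightarrow> v0 = Inl v"
  by (cases v0) auto

lemma keepu_Nil1[simp]: "keepu [] vs = []" by (simp add: keepu_def)
lemma keepu_Nil2[simp]: "keepu xs [] = []" by (simp add: keepu_def)
lemma keepu_Cons[simp]: "keepu (x # xs) (v # vs) = (if isl x then v # keepu xs vs else keepu xs vs)"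
  by (simp add: keepu_def)

lemma upds_proj: "length xs = length vs \<Longrightarrow> (\<forall>y. s' y = s (Inl y)) \<Longrightarrow>
  upds s' (map projl (filter isl xs)) (keepu xs vs) y = upds s xs vs (Inl y)"
proof (induction xs arbitrary: vs s s')
  case Nil then show ?case by simp
next
  case (Cons x xs)
  then obtain v vs' where vs: "vs = v # vs'" by (cases vs) auto
  show ?case
  proof (cases x)
    case (Inl x')
    have "\<forall>y. (s'(x' := v)) y = (s(x := v)) (Inl y)" using Cons.prems Inl by auto
    then show ?thesis using Cons.IH[where vs=vs' and s="s(x := v)" and s'="s'(x' := v)"] Cons.prems Inl vs by (simp add: fun_upd_def)
  next
    case (Inr x')
    have "\<forall>y. s' y = (s(x := v)) (Inl y)" using Cons.prems Inr by auto
    then show ?thesis using Cons.IH[where vs=vs' and s="s(x := v)" and s'=s'] Cons.prems Inr vs by (simp add: fun_upd_def)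
  qed
qed

lemma keepu_args: "list_all2 (\<lambda>a b. isl a \<longrightarrow> isl b) xs ts \<Longrightarrow> (\<forall>y. s' y = s (Inl y)) \<Longrightarrow>
  map s' (map projl (keepu xs ts)) = keepu xs (map s ts)"
  by (induction rule: list_all2_induct) (auto simp: isl_def)

lemma keepu_same: "list_all2 (\<lambda>a b. isl a = isl b) rs os \<Longrightarrow> keepu os rs = filter isl rs"
  by (induction rule: list_all2_induct) auto

lemma keepu_outs: "list_all2 (\<lambda>a b. isl a = isl b) rs os \<Longrightarrow> (\<forall>y. s' y = s (Inl y)) \<Longrightarrow>
  map s' (map projl (filter isl os)) = keepu rs (map s os)"
  by (induction rule: list_all2_induct) (auto simp: isl_def)

lemma beval_proj: "(\<forall>x\<in>bvars e. isl x) \<Longrightarrow> beval (\<lambda>x. s (Inl x)) (bmap projl e) = beval s e"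
proof (induction e)
  case (BVar x) then show ?case by (auto simp: isl_def)
next
  case (BFn g es)
  then have "map (beval (\<lambda>x. s (Inl x))) (map (bmap projl) es) = map (beval s) es" by auto
  then show ?case by (simp only: beval.simps bmap.simps)
qed

lemma ceval_proj: "user_cond c \<Longrightarrow> ceval (\<lambda>x. s (Inl x)) (cmap projl c) = ceval s c"
proof (induction c)
  case (CEq a b) then show ?case by (simp add: user_cond_def beval_proj)
next
  case (CPred p es)
  then have "map (beval (\<lambda>x. s (Inl x))) (map (bmap projl) es) = map (beval s) es"
    by (auto simp: user_cond_def beval_proj)
  then show ?case by (simp only: ceval.simps cmap.simps)
qed (auto simp: user_cond_def)

lemma proj_Skip: "proj E c = SSkip \<Longrightarrow> gh E c"
  by (cases c) (auto split: if_splits)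


lemma proj_SNil: "proj E c = SNil x' \<Longrightarrow> c = SNil (Inl x')"
  by (cases c) (auto split: if_splits simp: isl_def)
lemma proj_SAsg: "proj E c = SAsg x' y' \<Longrightarrow> \<exists>y. c = SAsg (Inl x') y \<and> y' = projl y"
  by (cases c) (auto split: if_splits simp: isl_def)
lemma proj_SBAsg: "proj E c = SBAsg x' e' \<Longrightarrow> \<exists>e. c = SBAsg (Inl x') e \<and> e' = bmap projl e"
  by (cases c) (auto split: if_splits simp: isl_def)
lemma proj_SLookup: "proj E c = SLookup y' x' f' \<Longrightarrow> \<exists>x f. c = SLookup (Inl y') x f \<and> x' = projl x \<and> f' = projl f"
  by (cases c) (auto split: if_splits simp: isl_def)
lemma proj_SMut: "proj E c = SMut x' f' y' \<Longrightarrow> \<exists>x y. c = SMut x (Inl f') y \<and> x' = projl x \<and> y' = projl y"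
  by (cases c) (auto split: if_splits simp: isl_def)
lemma proj_SNew: "proj E c = SNew x' \<Longrightarrow> \<exists>x. c = SNew x \<and> x' = projl x"
  by (cases c) (auto split: if_splits)
lemma proj_SCall: "proj E c = SCall rs' m ts' \<Longrightarrow> \<exists>rs ts. c = SCall rs m ts \<and> \<not> mghost (E m) \<and>
    rs' = map projl (keepu (mouts (E m)) rs) \<and> ts' = map projl (keepu (mins (E m)) ts)"
  by (cases c) (auto split: if_splits)
lemma proj_SAssume: "proj E c = SAssume b' \<Longrightarrow> \<exists>b. c = SAssume b \<and> b' = cmap projl b"
  by (cases c) (auto split: if_splits)
lemma proj_SReturn: "proj E c = SReturn \<Longrightarrow> c = SReturn"
  by (cases c) (auto split: if_splits)
lemma proj_SSeq: "proj E c = SSeq a' b' \<Longrightarrow> \<exists>a b. c = SSeq a b \<and> \<not> gh E (SSeq a b) \<and> a' = proj E a \<and> b' = proj E b"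
  by (cases c) (auto split: if_splits)
lemma proj_SIf: "proj E c = SIf d' a' b' \<Longrightarrow> \<exists>d a b. c = SIf d a b \<and> \<not> gh E (SIf d a b) \<and> d' = cmap projl d \<and> a' = proj E a \<and> b' = proj E b"
  by (cases c) (auto split: if_splits)
lemma proj_SWhile: "proj E c = SWhile d' a' \<Longrightarrow> \<exists>d a. c = SWhile d a \<and> \<not> gh E (SWhile d a) \<and> d' = cmap projl d \<and> a' = proj E a"
  by (cases c) (auto split: if_splits)

definition Rel :: "('x,'f,'o,'b) conf \<Rightarrow> ('x + 'gx,'f + 'g,'o,'b) conf \<Rightarrow> bool" where
  "Rel \<sigma> \<sigma>a \<longleftrightarrow> (\<forall>x. st \<sigma> x = st \<sigma>a (Inl x)) \<and> al \<sigma> = al \<sigma>a \<and> (\<forall>f. hp \<sigma> f = hp \<sigma>a (Inl f))"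

fun corr :: "('x,'f,'o,'b) outcome \<Rightarrow> ('x + 'gx,'f + 'g,'o,'b) outcome \<Rightarrow> bool" where
  "corr (Norm \<sigma>) ra = (\<exists>\<sigma>a. ra = Norm \<sigma>a \<and> Rel \<sigma> \<sigma>a)"
| "corr (Ret \<sigma>) ra = (\<exists>\<sigma>a. ra = Ret \<sigma>a \<and> Rel \<sigma> \<sigma>a)"
| "corr Err ra = (ra = Err)"

lemma Rel_st: "Rel \<sigma> \<sigma>a \<Longrightarrow> st \<sigma> = (\<lambda>x. st \<sigma>a (Inl x))"
  by (auto simp: Rel_def)

lemma Pw_sub:
  "Pw D E (SSeq a b) \<Longrightarrow> Pw D E a \<and> Pw D E b"
  "Pw D E (SIf d a b) \<Longrightarrow> Pw D E a \<and> Pw D E b"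
  "Pw D E (SWhile d a) \<Longrightarrow> Pw D E a"
  by (auto simp: Pw_def)

context
  fixes dflt :: "'f \<Rightarrow> ('o,'b) val" and D :: "'f + 'g \<Rightarrow> ('o,'b) val"
    and E :: "('x + 'gx, 'f + 'g, 'o, 'b, 'm) env"
  assumes Ddef: "\<And>f. D (Inl f) = dflt f" and nD: "\<forall>f. \<not> is_obj (D f)"
    and gok: "\<forall>m. gh_ok E (mbody (E m))" and gbody: "\<forall>m. mghost (E m) \<longrightarrow> gh E (mbody (E m))"
    and gterm: "\<forall>m. mghost (E m) \<longrightarrow> terminates D E (mbody (E m))"
    and pwb: "\<forall>m. Pw D E (mbody (E m))"
begin

lemma sim: "exec dflt (proj_env E) s \<sigma> r \<Longrightarrow> proj E c = s \<Longrightarrow> gh_ok E c \<Longrightarrow> Pw D E c \<Longrightarrow>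
  Rel \<sigma> \<sigma>a \<Longrightarrow> wf_conf \<sigma>a \<Longrightarrow> exec D E c \<sigma>a Err \<or> (\<exists>ra. exec D E c \<sigma>a ra \<and> corr r ra)"
proof (induction arbitrary: c \<sigma>a rule: exec.induct)
  case (Skip \<sigma>)
  have g: "gh E c" using proj_Skip[OF Skip.prems(1)] by blast
  obtain ra where ex: "exec D E c \<sigma>a ra" using gh_term[OF g Skip.prems(3) gterm nD Skip.prems(5)] by blast
  show ?case
  proof (cases ra)
    case (Norm \<sigma>a')
    have "usame \<sigma>a \<sigma>a'" using upart[OF ex g Skip.prems(2) gok gbody] Norm by blast
    then have "Rel \<sigma> \<sigma>a'" using Skip.prems(4) by (auto simp: Rel_def usame_def)
    then show ?thesis using ex Norm by auto
  next
    case (Ret \<sigma>a') then show ?thesis using gh_noret[OF ex g] by blast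
  next
    case Err then show ?thesis using ex by blast
  qed
next
  case (NilA x \<sigma>)
  have c: "c = SNil (Inl x)" by (rule proj_SNil[OF NilA.prems(1)])
  have "exec D E c \<sigma>a (Norm (\<sigma>a\<lparr>st := (st \<sigma>a)(Inl x := NilV)\<rparr>))" unfolding c by (rule exec.NilA)
  moreover have "Rel (\<sigma>\<lparr>st := (st \<sigma>)(x := NilV)\<rparr>) (\<sigma>a\<lparr>st := (st \<sigma>a)(Inl x := NilV)\<rparr>)"
    using NilA.prems(4) by (auto simp: Rel_def)
  ultimately show ?case by auto
next
  case (Asg x y \<sigma>)
  obtain y0 where c: "c = SAsg (Inl x) y0" "y = projl y0" using proj_SAsg[OF Asg.prems(1)] by blast
  have i_y0: "isl y0" using Asg.prems(2) unfolding c(1) by simp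
  have y0: "y0 = Inl y" using isl_projl[OF i_y0 c(2)] .
  have "exec D E c \<sigma>a (Norm (\<sigma>a\<lparr>st := (st \<sigma>a)(Inl x := st \<sigma>a (Inl y))\<rparr>))" unfolding c(1) y0 by (rule exec.Asg)
  moreover have "Rel (\<sigma>\<lparr>st := (st \<sigma>)(x := st \<sigma> y)\<rparr>) (\<sigma>a\<lparr>st := (st \<sigma>a)(Inl x := st \<sigma>a (Inl y))\<rparr>)"
    using Asg.prems(4) by (auto simp: Rel_def)
  ultimately show ?case by auto
next
  case (BAsg x e \<sigma>)
  obtain e0 where c: "c = SBAsg (Inl x) e0" "e = bmap projl e0" using proj_SBAsg[OF BAsg.prems(1)] by blast
  have ue: "\<forall>x\<in>bvars e0. isl x" using BAsg.prems(2) c by (auto simp: user_bexp_def)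
  have ev: "beval (st \<sigma>) e = beval (st \<sigma>a) e0"
    using beval_proj[OF ue, of "st \<sigma>a"] Rel_st[OF BAsg.prems(4)] c by simp
  have "exec D E c \<sigma>a (Norm (\<sigma>a\<lparr>st := (st \<sigma>a)(Inl x := beval (st \<sigma>a) e0)\<rparr>))" unfolding c(1) by (rule exec.BAsg)
  moreover have "Rel (\<sigma>\<lparr>st := (st \<sigma>)(x := beval (st \<sigma>) e)\<rparr>) (\<sigma>a\<lparr>st := (st \<sigma>a)(Inl x := beval (st \<sigma>a) e0)\<rparr>)"
    using BAsg.prems(4) ev by (auto simp: Rel_def)
  ultimately show ?case by auto
next
  case (Lookup \<sigma> x ob y f)
  obtain x0 f0 where c: "c = SLookup (Inl y) x0 f0" "x = projl x0" "f = projl f0"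
    using proj_SLookup[OF Lookup.prems(1)] by blast
  have i_x0a: "isl x0" using Lookup.prems(2) unfolding c(1) by simp
  have x0a: "x0 = Inl x" using isl_projl[OF i_x0a c(2)] .
  have i_x0b: "isl f0" using Lookup.prems(2) unfolding c(1) by simp
  have x0b: "f0 = Inl f" using isl_projl[OF i_x0b c(3)] .
  note x0 = x0a x0b
  have "st \<sigma>a (Inl x) = Obj ob" using Lookup.hyps Lookup.prems(4) by (auto simp: Rel_def)
  then have "exec D E c \<sigma>a (Norm (\<sigma>a\<lparr>st := (st \<sigma>a)(Inl y := hp \<sigma>a (Inl f) ob)\<rparr>))" unfolding c(1) x0 by (rule exec.Lookup)
  moreover have "Rel (\<sigma>\<lparr>st := (st \<sigma>)(y := hp \<sigma> f ob)\<rparr>) (\<sigma>a\<lparr>st := (st \<sigma>a)(Inl y := hp \<sigma>a (Inl f) ob)\<rparr>)"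
    using Lookup.prems(4) by (auto simp: Rel_def)
  ultimately show ?case by auto
next
  case (LookupErr \<sigma> x y f)
  obtain x0 f0 where c: "c = SLookup (Inl y) x0 f0" "x = projl x0" "f = projl f0"
    using proj_SLookup[OF LookupErr.prems(1)] by blast
  have i_x0: "isl x0" using LookupErr.prems(2) unfolding c(1) by simp
  have x0: "x0 = Inl x" using isl_projl[OF i_x0 c(2)] .
  have "\<not> is_obj (st \<sigma>a (Inl x))" using LookupErr.hyps LookupErr.prems(4) by (auto simp: Rel_def)
  then have "exec D E c \<sigma>a Err" unfolding c(1) x0 by (rule exec.LookupErr)
  then show ?case by auto
next
  case (Mut \<sigma> x ob f y)
  obtain x0 y0 where c: "c = SMut x0 (Inl f) y0" "x = projl x0" "y = projl y0"
    using proj_SMut[OF Mut.prems(1)] by blast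
  have i_x0a: "isl x0" using Mut.prems(2) unfolding c(1) by simp
  have x0a: "x0 = Inl x" using isl_projl[OF i_x0a c(2)] .
  have i_x0b: "isl y0" using Mut.prems(2) unfolding c(1) by simp
  have x0b: "y0 = Inl y" using isl_projl[OF i_x0b c(3)] .
  note x0 = x0a x0b
  have "st \<sigma>a (Inl x) = Obj ob" using Mut.hyps Mut.prems(4) by (auto simp: Rel_def)
  then have "exec D E c \<sigma>a (Norm (\<sigma>a\<lparr>hp := (hp \<sigma>a)(Inl f := (hp \<sigma>a (Inl f))(ob := st \<sigma>a (Inl y)))\<rparr>))"
    unfolding c(1) x0 by (rule exec.Mut)
  moreover have "Rel (\<sigma>\<lparr>hp := (hp \<sigma>)(f := (hp \<sigma> f)(ob := st \<sigma> y))\<rparr>) (\<sigma>a\<lparr>hp := (hp \<sigma>a)(Inl f := (hp \<sigma>a (Inl f))(ob := st \<sigma>a (Inl y)))\<rparr>)"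
    using Mut.prems(4) by (auto simp: Rel_def)
  ultimately show ?case by auto
next
  case (MutErr \<sigma> x f y)
  obtain x0 y0 where c: "c = SMut x0 (Inl f) y0" "x = projl x0" "y = projl y0"
    using proj_SMut[OF MutErr.prems(1)] by blast
  have i_x0: "isl x0" using MutErr.prems(2) unfolding c(1) by simp
  have x0: "x0 = Inl x" using isl_projl[OF i_x0 c(2)] .
  have "\<not> is_obj (st \<sigma>a (Inl x))" using MutErr.hyps MutErr.prems(4) by (auto simp: Rel_def)
  then have "exec D E c \<sigma>a Err" unfolding c(1) x0 by (rule exec.MutErr)
  then show ?case by auto
next
  case (New ob \<sigma> x)
  obtain x0 where c: "c = SNew x0" "x = projl x0" using proj_SNew[OF New.prems(1)] by blast
  have i_x0: "isl x0" using New.prems(2) unfolding c(1) by simp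
  have x0: "x0 = Inl x" using isl_projl[OF i_x0 c(2)] .
  have "ob \<notin> al \<sigma>a" using New.hyps New.prems(4) by (auto simp: Rel_def)
  then have "exec D E c \<sigma>a (Norm (\<sigma>a\<lparr>st := (st \<sigma>a)(Inl x := Obj ob), al := insert ob (al \<sigma>a),
                                       hp := (\<lambda>f. (hp \<sigma>a f)(ob := D f))\<rparr>))"
    unfolding c(1) x0 by (rule exec.New)
  moreover have "Rel (\<sigma>\<lparr>st := (st \<sigma>)(x := Obj ob), al := insert ob (al \<sigma>),
                                       hp := (\<lambda>f. (hp \<sigma> f)(ob := dflt f))\<rparr>)
     (\<sigma>a\<lparr>st := (st \<sigma>a)(Inl x := Obj ob), al := insert ob (al \<sigma>a),
                                       hp := (\<lambda>f. (hp \<sigma>a f)(ob := D f))\<rparr>)"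
    using New.prems(4) by (auto simp: Rel_def Ddef)
  ultimately show ?case by auto
next
  case (Call m \<sigma> ts r \<sigma>1 rs)
  obtain rs0 ts0 where c: "c = SCall rs0 m ts0" "\<not> mghost (E m)"
    "rs = map projl (keepu (mouts (E m)) rs0)" "ts = map projl (keepu (mins (E m)) ts0)"
    using proj_SCall[OF Call.prems(1)] by blast
  have ok: "length ts0 = length (mins (E m))" "length rs0 = length (mouts (E m))"
    "\<forall>i<length ts0. isl (mins (E m) ! i) \<longrightarrow> isl (ts0 ! i)"
    "\<forall>i<length rs0. isl (rs0 ! i) = isl (mouts (E m) ! i)"
    using Call.prems(2) c by auto
  have la1: "list_all2 (\<lambda>a b. isl a \<longrightarrow> isl b) (mins (E m)) ts0" using ok by (simp add: list_all2_conv_all_nth)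
  have la2: "list_all2 (\<lambda>a b. isl a = isl b) rs0 (mouts (E m))" using ok by (simp add: list_all2_conv_all_nth)
  define \<sigma>c where "\<sigma>c = \<sigma>a\<lparr>st := upds (\<lambda>_. NilV) (mins (E m)) (map (st \<sigma>a) ts0)\<rparr>"
  have sts: "\<forall>y. st \<sigma> y = st \<sigma>a (Inl y)" using Call.prems(4) by (simp add: Rel_def)
  have args: "map (st \<sigma>) ts = keepu (mins (E m)) (map (st \<sigma>a) ts0)"
    using keepu_args[OF la1 sts] c(4) by simp
  have Rc: "Rel (\<sigma>\<lparr>st := upds (\<lambda>_. NilV) (mins (proj_env E m)) (map (st \<sigma>) ts)\<rparr>) \<sigma>c"
    unfolding Rel_def \<sigma>c_def using Call.prems(4) ok(1) args
    by (auto simp: proj_env_def Rel_def intro!: upds_proj)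
  have wc: "wf_conf \<sigma>c" unfolding \<sigma>c_def by (rule wf_call[OF Call.prems(5)])
  have pb: "proj E (mbody (E m)) = mbody (proj_env E m)" by (simp add: proj_env_def)
  have IH: "exec D E (mbody (E m)) \<sigma>c Err \<or> (\<exists>ra. exec D E (mbody (E m)) \<sigma>c ra \<and> corr r ra)"
    using Call.IH[OF pb gok[rule_format] pwb[rule_format] Rc wc] .
  show ?case
  proof (cases "exec D E (mbody (E m)) \<sigma>c Err")
    case True
    then have "exec D E c \<sigma>a Err" unfolding c(1) \<sigma>c_def by (rule exec.CallErr)
    then show ?thesis by auto
  next
    case False
    then obtain ra \<sigma>a1 where ra: "exec D E (mbody (E m)) \<sigma>c ra" "ra = Norm \<sigma>a1 \<or> ra = Ret \<sigma>a1" "Rel \<sigma>1 \<sigma>a1"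
      using IH \<open>r = Norm \<sigma>1 \<or> r = Ret \<sigma>1\<close> by auto
    have "exec D E c \<sigma>a (Norm (\<sigma>a1\<lparr>st := upds (st \<sigma>a) rs0 (map (st \<sigma>a1) (mouts (E m)))\<rparr>))"
      unfolding c(1) using ra(1,2) unfolding \<sigma>c_def by (rule exec.Call)
    moreover
    have sts1: "\<forall>y. st \<sigma>1 y = st \<sigma>a1 (Inl y)" using ra(3) by (simp add: Rel_def)
    have e1: "rs = map projl (filter isl rs0)" using c(3) keepu_same[OF la2] by simp
    have e2: "map (st \<sigma>1) (mouts (proj_env E m)) = keepu rs0 (map (st \<sigma>a1) (mouts (E m)))"
      using keepu_outs[OF la2 sts1] by (simp add: proj_env_def)
    have "Rel (\<sigma>1\<lparr>st := upds (st \<sigma>) rs (map (st \<sigma>1) (mouts (proj_env E m)))\<rparr>)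
              (\<sigma>a1\<lparr>st := upds (st \<sigma>a) rs0 (map (st \<sigma>a1) (mouts (E m)))\<rparr>)"
      using ra(3) e1 e2 ok(2) sts by (auto simp: Rel_def intro!: upds_proj)
    ultimately show ?thesis by auto
  qed
next
  case (CallErr m \<sigma> ts rs)
  obtain rs0 ts0 where c: "c = SCall rs0 m ts0" "\<not> mghost (E m)"
    "rs = map projl (keepu (mouts (E m)) rs0)" "ts = map projl (keepu (mins (E m)) ts0)"
    using proj_SCall[OF CallErr.prems(1)] by blast
  have ok: "length ts0 = length (mins (E m))"
    "\<forall>i<length ts0. isl (mins (E m) ! i) \<longrightarrow> isl (ts0 ! i)"
    using CallErr.prems(2) c by auto
  have la1: "list_all2 (\<lambda>a b. isl a \<longrightarrow> isl b) (mins (E m)) ts0" using ok by (simp add: list_all2_conv_all_nth)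
  define \<sigma>c where "\<sigma>c = \<sigma>a\<lparr>st := upds (\<lambda>_. NilV) (mins (E m)) (map (st \<sigma>a) ts0)\<rparr>"
  have sts: "\<forall>y. st \<sigma> y = st \<sigma>a (Inl y)" using CallErr.prems(4) by (simp add: Rel_def)
  have args: "map (st \<sigma>) ts = keepu (mins (E m)) (map (st \<sigma>a) ts0)"
    using keepu_args[OF la1 sts] c(4) by simp
  have Rc: "Rel (\<sigma>\<lparr>st := upds (\<lambda>_. NilV) (mins (proj_env E m)) (map (st \<sigma>) ts)\<rparr>) \<sigma>c"
    unfolding Rel_def \<sigma>c_def using CallErr.prems(4) ok(1) args
    by (auto simp: proj_env_def Rel_def intro!: upds_proj)
  have wc: "wf_conf \<sigma>c" unfolding \<sigma>c_def by (rule wf_call[OF CallErr.prems(5)])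
  have pb: "proj E (mbody (E m)) = mbody (proj_env E m)" by (simp add: proj_env_def)
  have "exec D E (mbody (E m)) \<sigma>c Err"
    using CallErr.IH[OF pb gok[rule_format] pwb[rule_format] Rc wc] by auto
  then have "exec D E c \<sigma>a Err" unfolding c(1) \<sigma>c_def by (rule exec.CallErr)
  then show ?case by auto
next
  case (Assume \<sigma> b)
  obtain b0 where c: "c = SAssume b0" "b = cmap projl b0" using proj_SAssume[OF Assume.prems(1)] by blast
  have "user_cond b0" using Assume.prems(2) c by simp
  then have "ceval (st \<sigma>a) b0" using Assume.hyps c ceval_proj[of b0 "st \<sigma>a"] Rel_st[OF Assume.prems(4)] by simp
  then have "exec D E c \<sigma>a (Norm \<sigma>a)" unfolding c(1) by (rule exec.Assume)
  then show ?case using Assume.prems(4) by auto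
next
  case (Return \<sigma>)
  have "c = SReturn" by (rule proj_SReturn[OF Return.prems(1)])
  then show ?case using Return.prems(4) by (auto intro: exec.Return)
next
  case (SeqN a \<sigma> \<sigma>1 b r)
  obtain a0 b0 where c: "c = SSeq a0 b0" "a = proj E a0" "b = proj E b0" using proj_SSeq[OF SeqN.prems(1)] by blast
  have ok: "gh_ok E a0" "gh_ok E b0" using SeqN.prems(2) c by auto
  have pw: "Pw D E a0" "Pw D E b0" using Pw_sub(1) SeqN.prems(3) c by blast+
  have IHa: "exec D E a0 \<sigma>a Err \<or> (\<exists>ra. exec D E a0 \<sigma>a ra \<and> corr (Norm \<sigma>1) ra)"
    using SeqN.IH(1)[OF c(2)[symmetric] ok(1) pw(1) SeqN.prems(4,5)] .
  show ?case
  proof (cases "exec D E a0 \<sigma>a Err")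
    case True then show ?thesis unfolding c(1) by (blast intro: exec.SeqE)
  next
    case False
    then obtain \<sigma>a1 where a1: "exec D E a0 \<sigma>a (Norm \<sigma>a1)" "Rel \<sigma>1 \<sigma>a1" using IHa by auto
    have w1: "wf_conf \<sigma>a1" using wfp[OF a1(1) nD SeqN.prems(5)] by blast
    have IHb: "exec D E b0 \<sigma>a1 Err \<or> (\<exists>ra. exec D E b0 \<sigma>a1 ra \<and> corr r ra)"
      using SeqN.IH(2)[OF c(3)[symmetric] ok(2) pw(2) a1(2) w1] .
    then show ?thesis unfolding c(1) using a1(1) by (blast intro: exec.SeqN)
  qed
next
  case (SeqR a \<sigma> \<sigma>1 b)
  obtain a0 b0 where c: "c = SSeq a0 b0" "a = proj E a0" "b = proj E b0" using proj_SSeq[OF SeqR.prems(1)] by blast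
  have ok: "gh_ok E a0" using SeqR.prems(2) c by auto
  have pw: "Pw D E a0" using Pw_sub(1) SeqR.prems(3) c by blast
  have IHa: "exec D E a0 \<sigma>a Err \<or> (\<exists>ra. exec D E a0 \<sigma>a ra \<and> corr (Ret \<sigma>1) ra)"
    using SeqR.IH[OF c(2)[symmetric] ok pw SeqR.prems(4,5)] .
  then show ?case unfolding c(1) by (auto intro: exec.SeqE exec.SeqR)
next
  case (SeqE a \<sigma> b)
  obtain a0 b0 where c: "c = SSeq a0 b0" "a = proj E a0" "b = proj E b0" using proj_SSeq[OF SeqE.prems(1)] by blast
  have ok: "gh_ok E a0" using SeqE.prems(2) c by auto
  have pw: "Pw D E a0" using Pw_sub(1) SeqE.prems(3) c by blast
  have IHa: "exec D E a0 \<sigma>a Err \<or> (\<exists>ra. exec D E a0 \<sigma>a ra \<and> corr Err ra)"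
    using SeqE.IH[OF c(2)[symmetric] ok pw SeqE.prems(4,5)] .
  then show ?case unfolding c(1) by (auto intro: exec.SeqE)
next
  case (IfT \<sigma> d a r b)
  obtain d0 a0 b0 where c: "c = SIf d0 a0 b0" "\<not> gh E (SIf d0 a0 b0)" "d = cmap projl d0" "a = proj E a0" "b = proj E b0"
    using proj_SIf[OF IfT.prems(1)] by blast
  have ok: "gh_ok E a0" "user_cond d0" using IfT.prems(2) c by auto
  have pw: "Pw D E a0" using Pw_sub(2) IfT.prems(3) c by blast
  have cd: "ceval (st \<sigma>a) d0" using IfT.hyps(1) c ceval_proj[OF ok(2), of "st \<sigma>a"] Rel_st[OF IfT.prems(4)] by simp
  have "exec D E a0 \<sigma>a Err \<or> (\<exists>ra. exec D E a0 \<sigma>a ra \<and> corr r ra)"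
    using IfT.IH[OF c(4)[symmetric] ok(1) pw IfT.prems(4,5)] .
  then show ?case unfolding c(1) using cd by (blast intro: exec.IfT)
next
  case (IfF \<sigma> d b r a)
  obtain d0 a0 b0 where c: "c = SIf d0 a0 b0" "\<not> gh E (SIf d0 a0 b0)" "d = cmap projl d0" "a = proj E a0" "b = proj E b0"
    using proj_SIf[OF IfF.prems(1)] by blast
  have ok: "gh_ok E b0" "user_cond d0" using IfF.prems(2) c by auto
  have pw: "Pw D E b0" using Pw_sub(2) IfF.prems(3) c by blast
  have cd: "\<not> ceval (st \<sigma>a) d0" using IfF.hyps(1) c ceval_proj[OF ok(2), of "st \<sigma>a"] Rel_st[OF IfF.prems(4)] by simp
  have "exec D E b0 \<sigma>a Err \<or> (\<exists>ra. exec D E b0 \<sigma>a ra \<and> corr r ra)"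
    using IfF.IH[OF c(5)[symmetric] ok(1) pw IfF.prems(4,5)] .
  then show ?case unfolding c(1) using cd by (blast intro: exec.IfF)
next
  case (WhileF \<sigma> d a)
  obtain d0 a0 where c: "c = SWhile d0 a0" "\<not> gh E (SWhile d0 a0)" "d = cmap projl d0" "a = proj E a0"
    using proj_SWhile[OF WhileF.prems(1)] by blast
  have ok: "user_cond d0" using WhileF.prems(2) c by auto
  have cd: "\<not> ceval (st \<sigma>a) d0" using WhileF.hyps(1) c ceval_proj[OF ok, of "st \<sigma>a"] Rel_st[OF WhileF.prems(4)] by simp
  then have "exec D E c \<sigma>a (Norm \<sigma>a)" unfolding c(1) by (rule exec.WhileF)
  then show ?case using WhileF.prems(4) by auto
next
  case (WhileN \<sigma> d a \<sigma>1 r)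
  obtain d0 a0 where c: "c = SWhile d0 a0" "\<not> gh E (SWhile d0 a0)" "d = cmap projl d0" "a = proj E a0"
    using proj_SWhile[OF WhileN.prems(1)] by blast
  have ok: "user_cond d0" "gh_ok E a0" using WhileN.prems(2) c by auto
  have pw: "Pw D E a0" using Pw_sub(3) WhileN.prems(3) c by blast
  have cd: "ceval (st \<sigma>a) d0" using WhileN.hyps(1) c ceval_proj[OF ok(1), of "st \<sigma>a"] Rel_st[OF WhileN.prems(4)] by simp
  have IHa: "exec D E a0 \<sigma>a Err \<or> (\<exists>ra. exec D E a0 \<sigma>a ra \<and> corr (Norm \<sigma>1) ra)"
    using WhileN.IH(1)[OF c(4)[symmetric] ok(2) pw WhileN.prems(4,5)] .
  show ?case
  proof (cases "exec D E a0 \<sigma>a Err")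
    case True then show ?thesis unfolding c(1) using cd by (blast intro: exec.WhileE)
  next
    case False
    then obtain \<sigma>a1 where a1: "exec D E a0 \<sigma>a (Norm \<sigma>a1)" "Rel \<sigma>1 \<sigma>a1" using IHa by auto
    have w1: "wf_conf \<sigma>a1" using wfp[OF a1(1) nD WhileN.prems(5)] by blast
    have IHb: "exec D E c \<sigma>a1 Err \<or> (\<exists>ra. exec D E c \<sigma>a1 ra \<and> corr r ra)"
      using WhileN.IH(2)[OF _ WhileN.prems(2,3) a1(2) w1] WhileN.prems(1) by blast
    then show ?thesis unfolding c(1) using a1(1) cd by (blast intro: exec.WhileN)
  qed
next
  case (WhileR \<sigma> d a \<sigma>1)
  obtain d0 a0 where c: "c = SWhile d0 a0" "\<not> gh E (SWhile d0 a0)" "d = cmap projl d0" "a = proj E a0"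
    using proj_SWhile[OF WhileR.prems(1)] by blast
  have ok: "user_cond d0" "gh_ok E a0" using WhileR.prems(2) c by auto
  have pw: "Pw D E a0" using Pw_sub(3) WhileR.prems(3) c by blast
  have cd: "ceval (st \<sigma>a) d0" using WhileR.hyps(1) c ceval_proj[OF ok(1), of "st \<sigma>a"] Rel_st[OF WhileR.prems(4)] by simp
  have IHa: "exec D E a0 \<sigma>a Err \<or> (\<exists>ra. exec D E a0 \<sigma>a ra \<and> corr (Ret \<sigma>1) ra)"
    using WhileR.IH[OF c(4)[symmetric] ok(2) pw WhileR.prems(4,5)] .
  then show ?case unfolding c(1) using cd by (auto intro: exec.WhileE exec.WhileR)
next
  case (WhileE \<sigma> d a)
  obtain d0 a0 where c: "c = SWhile d0 a0" "\<not> gh E (SWhile d0 a0)" "d = cmap projl d0" "a = proj E a0"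
    using proj_SWhile[OF WhileE.prems(1)] by blast
  have ok: "user_cond d0" "gh_ok E a0" using WhileE.prems(2) c by auto
  have pw: "Pw D E a0" using Pw_sub(3) WhileE.prems(3) c by blast
  have cd: "ceval (st \<sigma>a) d0" using WhileE.hyps(1) c ceval_proj[OF ok(1), of "st \<sigma>a"] Rel_st[OF WhileE.prems(4)] by simp
  have IHa: "exec D E a0 \<sigma>a Err \<or> (\<exists>ra. exec D E a0 \<sigma>a ra \<and> corr Err ra)"
    using WhileE.IH[OF c(4)[symmetric] ok(2) pw WhileE.prems(4,5)] .
  then show ?case unfolding c(1) using cd by (auto intro: exec.WhileE)
qed

end


theorem proposition3p4:
  fixes \<rho> :: "(unit, 'f::finite + 'g::finite, 'o, 'b) fm"
    and \<psi>pre \<psi>post :: "('x, 'f + 'g, 'o, 'b) fm"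
    and E :: "('x + 'gx, 'f + 'g, 'o, 'b, 'm) env"
    and main :: "('x + 'gx, 'f + 'g, 'o, 'b, 'm) stmt"
    and dflt :: "'f \<Rightarrow> ('o,'b) val"
    and gdflt :: "'g \<Rightarrow> ('o,'b) val"
  assumes "\<forall>f. \<not> is_obj (dflt f)"
    and "\<forall>g. \<not> is_obj (gdflt g)"
    and "ghost_prog (case_sum dflt gdflt) E main"
    and "valid (case_sum dflt gdflt) E (aug_assn \<rho> \<psi>pre) main (aug_assn \<rho> \<psi>post)"
  shows "valid dflt (proj_env E) (ex_assn \<rho> \<psi>pre) (proj E main) (ex_assn \<rho> \<psi>post)"
proof -
  let ?D = "case_sum dflt gdflt"
  have Dd: "\<And>f. ?D (Inl f) = dflt f" by simp
  have nD: "\<forall>f. \<not> is_obj (?D f)" using assms(1,2) by (simp split: sum.split)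
  have gok_main: "gh_ok E main" and gok: "\<forall>m. gh_ok E (mbody (E m))"
    and gbody: "\<forall>m. mghost (E m) \<longrightarrow> gh E (mbody (E m))"
    and gterm: "\<forall>m. mghost (E m) \<longrightarrow> terminates ?D E (mbody (E m))"
    using assms(3) unfolding ghost_prog_def by blast+
  have pw_main: "Pw ?D E main" and pwb: "\<forall>m. Pw ?D E (mbody (E m))"
    using assms(3) unfolding ghost_prog_def Pw_def by blast+
  note S0 = sim[of ?D dflt E, OF Dd nD gok gbody gterm pwb]
  show ?thesis unfolding valid_def
  proof (intro allI impI conjI)
    fix \<sigma> assume H: "wf_conf \<sigma> \<and> ex_assn \<rho> \<psi>pre \<sigma>"
    then obtain G where G: "\<forall>g. \<forall>ob\<in>al \<sigma>. allocd (al \<sigma>) (G g ob)"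
      "holds_LC \<rho> (al \<sigma>) (case_sum (hp \<sigma>) G)" "feval (st \<sigma>) (case_sum (hp \<sigma>) G) \<psi>pre"
      unfolding ex_assn_def by blast
    define \<sigma>a :: "('x + 'gx, 'f + 'g, 'o, 'b) conf" where
      "\<sigma>a = \<lparr>st = case_sum (st \<sigma>) (\<lambda>_. NilV), al = al \<sigma>, hp = case_sum (hp \<sigma>) G\<rparr>"
    have R: "Rel \<sigma> \<sigma>a" by (simp add: Rel_def \<sigma>a_def)
    have W1: "allocd (al \<sigma>) (case_sum (st \<sigma>) (\<lambda>_. NilV) x)" for x
      using H by (cases x) (auto simp: wf_conf_def allocd_def)
    have W2: "allocd (al \<sigma>) (case_sum (hp \<sigma>) G f ob)" if "ob \<in> al \<sigma>" for f ob
      using H G that by (cases f) (auto simp: wf_conf_def)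
    have W: "wf_conf \<sigma>a" unfolding wf_conf_def
    proof (intro conjI allI ballI)
      show "finite (al \<sigma>a)" using H by (simp add: \<sigma>a_def wf_conf_def)
    next
      fix x show "allocd (al \<sigma>a) (st \<sigma>a x)" using W1[of x] by (simp add: \<sigma>a_def)
    next
      fix f ob assume "ob \<in> al \<sigma>a" then show "allocd (al \<sigma>a) (hp \<sigma>a f ob)" using W2[of ob f] by (simp add: \<sigma>a_def)
    qed
    have P: "aug_assn \<rho> \<psi>pre \<sigma>a" using G unfolding aug_assn_def \<sigma>a_def by simp
    have V: "\<not> exec ?D E main \<sigma>a Err \<and> (\<forall>\<sigma>'. exec ?D E main \<sigma>a (Norm \<sigma>') \<or> exec ?D E main \<sigma>a (Ret \<sigma>') \<longrightarrow> aug_assn \<rho> \<psi>post \<sigma>')"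
      using assms(4) W P unfolding valid_def by blast
    have S: "exec ?D E main \<sigma>a Err \<or> (\<exists>ra. exec ?D E main \<sigma>a ra \<and> corr r ra)"
      if e: "exec dflt (proj_env E) (proj E main) \<sigma> r" for r
      using S0[OF e refl gok_main pw_main R W] .
    show "\<not> exec dflt (proj_env E) (proj E main) \<sigma> Err"
    proof
      assume "exec dflt (proj_env E) (proj E main) \<sigma> Err"
      from S[OF this] V show False by auto
    qed
      fix \<sigma>' assume "exec dflt (proj_env E) (proj E main) \<sigma> (Norm \<sigma>') \<or> exec dflt (proj_env E) (proj E main) \<sigma> (Ret \<sigma>')"
      then obtain \<sigma>a' where ex: "exec ?D E main \<sigma>a (Norm \<sigma>a') \<or> exec ?D E main \<sigma>a (Ret \<sigma>a')" and R': "Rel \<sigma>' \<sigma>a'"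
      proof
        assume e: "exec dflt (proj_env E) (proj E main) \<sigma> (Norm \<sigma>')"
        from S[OF e] V obtain ra where "exec ?D E main \<sigma>a ra" "corr (Norm \<sigma>') ra" by blast
        then show ?thesis using that by auto
      next
        assume e: "exec dflt (proj_env E) (proj E main) \<sigma> (Ret \<sigma>')"
        from S[OF e] V obtain ra where "exec ?D E main \<sigma>a ra" "corr (Ret \<sigma>') ra" by blast
        then show ?thesis using that by auto
      qed
      have W': "wf_conf \<sigma>a'" using ex wfp[OF _ nD W] by blast
      have Q: "aug_assn \<rho> \<psi>post \<sigma>a'" using ex V by blast
      define G' where "G' = (\<lambda>g ob. hp \<sigma>a' (Inr g) ob)"
      have hh: "case_sum (hp \<sigma>') G' = hp \<sigma>a'"
      proof
        fix z show "case_sum (hp \<sigma>') G' z = hp \<sigma>a' z"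
          using R' by (cases z) (auto simp: Rel_def G'_def)
      qed
      have ss: "st \<sigma>' = (\<lambda>x. st \<sigma>a' (Inl x))" using Rel_st[OF R'] .
      have al: "al \<sigma>' = al \<sigma>a'" using R' by (simp add: Rel_def)
      show "ex_assn \<rho> \<psi>post \<sigma>'" unfolding ex_assn_def
      proof (intro exI[of _ G'] conjI)
        show "\<forall>g. \<forall>ob\<in>al \<sigma>'. allocd (al \<sigma>') (G' g ob)" using W' al unfolding wf_conf_def G'_def by auto
        show "holds_LC \<rho> (al \<sigma>') (case_sum (hp \<sigma>') G')" using Q al hh by (simp add: aug_assn_def)
        show "feval (st \<sigma>') (case_sum (hp \<sigma>') G') \<psi>post" using Q ss hh by (simp add: aug_assn_def)
      qed
  qed
qed

end
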